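(* Let $p\ge2$, $m\in\mathbb{N}$, $a,b>0$, $\beta\in\mathbb{R}^p$, and consider $f(x)=(1,x^T)^T$ for $x\in\mathbb{R}^{p-1}$. Let $x_1,\ldots,x_p\in\mathbb{R}^{p-1}$ be such that $f(x_1),\ldots,f(x_p)$ are linearly independent, let $c\in\mathbb{R}$ with $f(x_j)^T\beta=c$ for $j=1,\ldots,p-1$ and $f(x_p)^T\beta>c$. Let $$w_p^*=\frac{2}{p+\sqrt{(p-2)^2+4(p-1)\dfrac{1+\frac{m}{b}\exp(f(x_p)^T\beta)}{1+\frac{m}{b}\exp(c)}}},\qquad w_1^*=\cdots=w_{p-1}^*=\frac{1-w_p^*}{p-1},$$ and let $\xi$ be the design assigning weight $w_j^*$ to $x_j$, $j=1,\ldots,p$. Then $$e_1^TM_{Po}(\xi;\beta)e_1\cdot w_p^*-w_1^*e^c+\frac{b}{m}(1-p\,w_1^* )=0.$$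
   Context: $e_1$ is the first standard unit vector of $\mathbb{R}^p$. For a design $\xi$ with support $x_1,\ldots,x_l$ and weights $w_1,\ldots,w_l$, the Poisson information matrix is $M_{Po}(\xi;\beta)=\sum_{j=1}^l w_j\exp(f(x_j)^T\beta)f(x_j)f(x_j)^T$. *)

theory Defs
  imports Complex_Main
begin

text \<open>Vectors of R^k are represented as functions nat => real; only coordinates 0..k-1 matter.
  Coordinate i (0-based) corresponds to coordinate i+1 of the paper.\<close>

definition fvec :: "nat \<Rightarrow> (nat \<Rightarrow> real) \<Rightarrow> (nat \<Rightarrow> real)" where
  "fvec p x = (\<lambda>i. if i = 0 then 1 else if i < p then x (i - 1) else 0)"

definition dotp :: "nat \<Rightarrow> (nat \<Rightarrow> real) \<Rightarrow> (nat \<Rightarrow> real) \<Rightarrow> real" where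
  "dotp p u v = (\<Sum>i<p. u i * v i)"

definition lin_indep_vecs :: "nat \<Rightarrow> nat \<Rightarrow> (nat \<Rightarrow> nat \<Rightarrow> real) \<Rightarrow> bool" where
  "lin_indep_vecs p k V =
     (\<forall>c. (\<forall>i<p. (\<Sum>j<k. c j * V j i) = 0) \<longrightarrow> (\<forall>j<k. c j = 0))"

definition M_Po :: "nat \<Rightarrow> nat \<Rightarrow> (nat \<Rightarrow> real) \<Rightarrow> (nat \<Rightarrow> nat \<Rightarrow> real) \<Rightarrow> (nat \<Rightarrow> real)
                    \<Rightarrow> nat \<Rightarrow> nat \<Rightarrow> real" where
  "M_Po p l w X \<beta> = (\<lambda>r s. \<Sum>j<l. w j * exp (dotp p (fvec p (X j)) \<beta>)
                                   * fvec p (X j) r * fvec p (X j) s)"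

definition e1 :: "nat \<Rightarrow> real" where
  "e1 = (\<lambda>i. if i = 0 then 1 else 0)"

definition qform :: "nat \<Rightarrow> (nat \<Rightarrow> nat \<Rightarrow> real) \<Rightarrow> (nat \<Rightarrow> real) \<Rightarrow> real" where
  "qform p A u = (\<Sum>r<p. \<Sum>s<p. u r * A r s * u s)"

end

theory Submission
  imports Defs
begin

theorem lemma4:
  fixes p m :: nat and a b c :: real and \<beta> :: "nat \<Rightarrow> real"
    and X :: "nat \<Rightarrow> nat \<Rightarrow> real"
  assumes "p \<ge> 2" and "m > 0" and "a > 0" and "b > 0"
    and "lin_indep_vecs p p (\<lambda>j. fvec p (X j))"
    and "\<forall>j < p - 1. dotp p (fvec p (X j)) \<beta> = c"
    and "dotp p (fvec p (X (p - 1))) \<beta> > c"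
  shows "let wp = 2 / (real p + sqrt ((real p - 2)\<^sup>2 + 4 * (real p - 1) *
                  ((1 + real m / b * exp (dotp p (fvec p (X (p - 1))) \<beta>)) /
                   (1 + real m / b * exp c))));
             w1 = (1 - wp) / (real p - 1);
             w = (\<lambda>j. if j = p - 1 then wp else w1)
         in qform p (M_Po p p w X \<beta>) e1 * wp - w1 * exp c + b / real m * (1 - real p * w1) = 0"
proof -
  define d where "d = dotp p (fvec p (X (p - 1))) \<beta>"
  define r where "r = (1 + real m / b * exp d) / (1 + real m / b * exp c)"
  define S where "S = sqrt ((real p - 2)\<^sup>2 + 4 * (real p - 1) * r)"
  define wp where "wp = 2 / (real p + S)"
  define w1 where "w1 = (1 - wp) / (real p - 1)"
  define w where "w = (\<lambda>j. if j = p - 1 then wp else w1)"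
  have p1: "real p - 1 > 0" using assms(1) by simp
  have rpos: "r > 0" unfolding r_def using assms(2,4) by (intro divide_pos_pos add_pos_nonneg) auto
  have Dnn: "(real p - 2)\<^sup>2 + 4 * (real p - 1) * r \<ge> 0" using p1 rpos by (intro add_nonneg_nonneg) auto
  have S2: "S^2 = (real p - 2)\<^sup>2 + 4 * (real p - 1) * r" unfolding S_def using Dnn real_sqrt_pow2 by blast
  have Snn: "S \<ge> 0" unfolding S_def using Dnn by simp
  have pS: "real p + S > 0" using Snn assms(1) by simp
  have wpS: "wp * (real p + S) = 2" unfolding wp_def using pS by (simp add: field_simps)
  have quad: "(real p - 1) * (r - 1) * wp^2 + real p * wp - 1 = 0"
  proof -
    have "S * wp = 2 - real p * wp" using wpS by (simp add: algebra_simps)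
    hence "S^2 * wp^2 = (2 - real p * wp)^2" by (metis power_mult_distrib)
    thus ?thesis unfolding S2 by (simp add: power2_eq_square algebra_simps)
  qed
  have e1s: "\<And>A. qform p A e1 = A 0 0"
  proof -
    fix A :: "nat \<Rightarrow> nat \<Rightarrow> real"
    have "qform p A e1 = (\<Sum>r<p. if r = 0 then (\<Sum>s<p. A 0 s * e1 s) else 0)"
      unfolding qform_def by (intro sum.cong) (auto simp: e1_def)
    also have "\<dots> = (\<Sum>s<p. A 0 s * e1 s)" using assms(1) by (simp add: sum.delta)
    also have "\<dots> = (\<Sum>s<p. if s = 0 then A 0 0 else 0)"
      by (intro sum.cong) (auto simp: e1_def)
    also have "\<dots> = A 0 0" using assms(1) by (simp add: sum.delta)
    finally show "qform p A e1 = A 0 0" .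
  qed
  have M00: "M_Po p p w X \<beta> 0 0 = (real p - 1) * w1 * exp c + wp * exp d"
  proof -
    have "M_Po p p w X \<beta> 0 0 = (\<Sum>j<p. w j * exp (dotp p (fvec p (X j)) \<beta>))"
      unfolding M_Po_def by (simp add: fvec_def)
    also have "\<dots> = (\<Sum>j<Suc (p-1). w j * exp (dotp p (fvec p (X j)) \<beta>))"
      using assms(1) by simp
    also have "\<dots> = (\<Sum>j<p-1. w1 * exp c) + wp * exp d"
      unfolding sum.lessThan_Suc using assms(6) by (simp add: w_def d_def)
    also have "\<dots> = (real p - 1) * w1 * exp c + wp * exp d"
      using assms(1) by (simp add: of_nat_diff)
    finally show ?thesis .
  qed
  have goal: "((real p - 1) * w1 * exp c + wp * exp d) * wp - w1 * exp c + b / real m * (1 - real p * w1) = 0"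
  proof -
    define k where "k = b / real m"
    have kpos: "k > 0" unfolding k_def using assms(2,4) by simp
    have kc0: "k + exp c > 0" using kpos by (simp add: add_pos_pos)
    have r': "r = (k + exp d) / (k + exp c)"
    proof -
      have mb: "real m / b = 1 / k" unfolding k_def by simp
      have "(1 + exp d / k) / (1 + exp c / k) = (k + exp d) / (k + exp c)"
      proof -
        have a1: "1 + exp d / k = (k + exp d) / k" using kpos by (simp add: field_simps)
        have a2: "1 + exp c / k = (k + exp c) / k" using kpos by (simp add: field_simps)
        show ?thesis unfolding a1 a2 using kpos kc0 by simp
      qed
      thus ?thesis unfolding r_def mb by simp
    qed
    have kc: "k + exp c > 0" using kpos by (simp add: add_pos_pos)
    have q2: "(real p - 1) * (exp d - exp c) * wp^2 + real p * (k + exp c) * wp - (k + exp c) = 0"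
    proof -
      have z: "(k + exp c) * ((real p - 1) * (r - 1) * wp^2 + real p * wp - 1) = 0" using quad by simp
      have ed: "exp d = (k + exp c) * r - k" unfolding r' using kc by simp
      have "(real p - 1) * (exp d - exp c) * wp^2 + real p * (k + exp c) * wp - (k + exp c)
          = (k + exp c) * ((real p - 1) * (r - 1) * wp^2 + real p * wp - 1)"
        unfolding ed by (simp add: algebra_simps)
      with z show ?thesis by simp
    qed
    have "(real p - 1) * (((real p - 1) * w1 * exp c + wp * exp d) * wp - w1 * exp c + k * (1 - real p * w1))
        = (real p - 1) * (exp d - exp c) * wp^2 + real p * (k + exp c) * wp - (k + exp c)"
    proof -
      have hw: "(real p - 1) * w1 = 1 - wp" unfolding w1_def using p1 by simp
      have "(real p - 1) * (((real p - 1) * w1 * exp c + wp * exp d) * wp - w1 * exp c + k * (1 - real p * w1))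
          = (real p - 1) * (((real p - 1) * w1) * exp c + wp * exp d) * wp - ((real p - 1) * w1) * exp c
            + k * ((real p - 1) - real p * ((real p - 1) * w1))"
        by (simp add: algebra_simps)
      also have "\<dots> = (real p - 1) * (exp d - exp c) * wp^2 + real p * (k + exp c) * wp - (k + exp c)"
        unfolding hw by (simp add: algebra_simps power2_eq_square)
      finally show ?thesis .
    qed
    with q2 p1 show ?thesis unfolding k_def by simp
  qed
  show ?thesis unfolding Let_def
    using goal M00 e1s unfolding w_def w1_def wp_def S_def r_def d_def by simp
qed

end
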